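(* Assume Utility Richness, and assume Evidential Independence holds (for the choice sets under consideration). Suppose the agent is modest: there are an evidence partition $\mathcal{E}$, a cell $E\in\mathcal{E}$, and a state $\omega_0\in E$ with $p(\{\omega_0\})>0$ such that $\mathcal{P}_E(\omega_0)\neq p(\cdot\mid E)$. Then there exists a choice set $\mathcal{S}$ (with a unique post-learning optimal action in every state) such that $\mathrm{Val}_{General}(\mathcal{E})<0$.
   Context: Standing setup: $\Omega$ is a finite set of states; $p$ is a probability function on $\Omega$; $u:\mathscr{O}\to\mathbb{R}$ a utility function on outcomes; actions are functions $f:\Omega\to\mathscr{O}$; for a probability $q$, $\mathbb{E}_q(f)=\sum_{\omega} q(\{\omega\})u(f(\omega))$. A choice set $\mathcal{S}$ is a finite set of actions; $\mathcal{E}$ is a partition of $\Omega$ with $p(E)>0$ for all $E\in\mathcal{E}$, and $p(\cdot\mid E)$ is ratio conditional probability. An update rule assigns to each $E\in\mathcal{E}$ a map $\mathcal{P}_E:E\to\Delta(\Omega)$ (probability functions on $\Omega$) with $\mathcal{P}_E(\omega)(E)=1$; $\mathcal{P}_{\mathcal{E}}(\omega)=\mathcal{P}_E(\omega)$ for $\omega\in E$. For a choice set in which each $\omega$ has a unique maximizer $f^*_\omega\in\mathcal{S}$ of $\mathbb{E}_{\mathcal{P}_{\mathcal{E}}(\omega)}(\cdot)$, define $\mathrm{Val}_{General}(\mathcal{E})=\sum_{\omega\in\Omega}p(\{\omega\})u(f^*_\omega(\omega))-\max_{f\in\mathcal{S}}\mathbb{E}_p(f)$. Utility Richness: for every $x\in[0,1]$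 there is an outcome $o\in\mathscr{O}$ with $u(o)=x$ (utilities are determined up to positive affine transformation). Evidential Independence (relative to a choice set $\mathcal{S}$): for every $E\in\mathcal{E}$, every $f\in\mathcal{S}$ and every $g\in\mathcal{S}$ with $p(C_g)>0$ where $C_g=\{\omega\in E: f^*_\omega=g\}$, one has $\mathbb{E}_{p(\cdot\mid C_g)}(f)=\mathbb{E}_{p(\cdot\mid E)}(f)$. *)

theory Defs
  imports Complex_Main "HOL-Library.Disjoint_Sets"
begin

definition prob_fun :: "('w::finite \<Rightarrow> real) \<Rightarrow> bool" where
  "prob_fun q \<longleftrightarrow> (\<forall>w. q w \<ge> 0) \<and> (\<Sum>w\<in>UNIV. q w) = 1"

definition Pr :: "('w \<Rightarrow> real) \<Rightarrow> 'w set \<Rightarrow> real" where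
  "Pr q A = (\<Sum>w\<in>A. q w)"

definition cond :: "('w \<Rightarrow> real) \<Rightarrow> 'w set \<Rightarrow> ('w \<Rightarrow> real)" where
  "cond q A = (\<lambda>w. if w \<in> A then q w / Pr q A else 0)"

definition EU :: "('w::finite \<Rightarrow> real) \<Rightarrow> ('o \<Rightarrow> real) \<Rightarrow> ('w \<Rightarrow> 'o) \<Rightarrow> real" where
  "EU q u f = (\<Sum>w\<in>UNIV. q w * u (f w))"

definition utility_richness :: "('o \<Rightarrow> real) \<Rightarrow> bool" where
  "utility_richness u \<longleftrightarrow> (\<forall>x::real. 0 \<le> x \<and> x \<le> 1 \<longrightarrow> (\<exists>oc. u oc = x))"

definition evidence_partition :: "('w::finite \<Rightarrow> real) \<Rightarrow> 'w set set \<Rightarrow> bool" where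
  "evidence_partition p \<E> \<longleftrightarrow> partition_on UNIV \<E> \<and> (\<forall>E\<in>\<E>. Pr p E > 0)"

definition update_rule :: "'w set set \<Rightarrow> ('w set \<Rightarrow> 'w \<Rightarrow> ('w::finite \<Rightarrow> real)) \<Rightarrow> bool" where
  "update_rule \<E> P \<longleftrightarrow> (\<forall>E\<in>\<E>. \<forall>w\<in>E. prob_fun (P E w) \<and> Pr (P E w) E = 1)"

definition PE :: "'w set set \<Rightarrow> ('w set \<Rightarrow> 'w \<Rightarrow> ('w \<Rightarrow> real)) \<Rightarrow> 'w \<Rightarrow> ('w \<Rightarrow> real)" where
  "PE \<E> P w = P (THE E. E \<in> \<E> \<and> w \<in> E) w"

definition is_opt :: "('o \<Rightarrow> real) \<Rightarrow> 'w set set \<Rightarrow> ('w set \<Rightarrow> 'w \<Rightarrow> ('w::finite \<Rightarrow> real))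
    \<Rightarrow> ('w \<Rightarrow> 'o) set \<Rightarrow> 'w \<Rightarrow> ('w \<Rightarrow> 'o) \<Rightarrow> bool" where
  "is_opt u \<E> P S w f \<longleftrightarrow> f \<in> S \<and> (\<forall>g\<in>S. EU (PE \<E> P w) u g \<le> EU (PE \<E> P w) u f)"

definition unique_max where
  "unique_max u \<E> P S \<longleftrightarrow> (\<forall>w. \<exists>!f. is_opt u \<E> P S w f)"

definition fstar where
  "fstar u \<E> P S w = (THE f. is_opt u \<E> P S w f)"

definition Val_General :: "('w::finite \<Rightarrow> real) \<Rightarrow> ('o \<Rightarrow> real) \<Rightarrow> 'w set set
    \<Rightarrow> ('w set \<Rightarrow> 'w \<Rightarrow> ('w \<Rightarrow> real)) \<Rightarrow> ('w \<Rightarrow> 'o) set \<Rightarrow> real" where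
  "Val_General p u \<E> P S =
     (\<Sum>w\<in>UNIV. p w * u (fstar u \<E> P S w w)) - Max ((\<lambda>f. EU p u f) ` S)"

definition evidential_independence :: "('w::finite \<Rightarrow> real) \<Rightarrow> ('o \<Rightarrow> real) \<Rightarrow> 'w set set
    \<Rightarrow> ('w set \<Rightarrow> 'w \<Rightarrow> ('w \<Rightarrow> real)) \<Rightarrow> ('w \<Rightarrow> 'o) set \<Rightarrow> bool" where
  "evidential_independence p u \<E> P S \<longleftrightarrow>
     (\<forall>E\<in>\<E>. \<forall>f\<in>S. \<forall>g\<in>S.
        let C = {w\<in>E. fstar u \<E> P S w = g} in
        Pr p C > 0 \<longrightarrow> EU (cond p C) u f = EU (cond p E) u f)"

end

theory Submission
  imports Defs
begin

lemma zero_outside: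
  fixes q :: "'w::finite \<Rightarrow> real"
  assumes "prob_fun q" "Pr q A = 1" "w \<notin> A"
  shows "q w = 0"
proof -
  have nn: "\<forall>x. q x \<ge> 0" using assms(1) unfolding prob_fun_def by auto
  have "(\<Sum>x\<in>UNIV. q x) = (\<Sum>x\<in>A. q x) + (\<Sum>x\<in>-A. q x)"
    using sum.union_disjoint[of A "-A" q] by (simp add: Un_commute)
  hence "(\<Sum>x\<in>-A. q x) = 0" using assms(1,2) unfolding prob_fun_def Pr_def by simp
  hence "\<forall>x\<in>-A. q x = 0" using nn by (simp add: sum_nonneg_eq_0_iff)
  thus ?thesis using assms(3) by auto
qed

lemma conc_sum:
  fixes q :: "'w::finite \<Rightarrow> real"
  assumes "\<And>w. w \<notin> A \<Longrightarrow> q w = 0" "\<And>w. w \<in> A \<Longrightarrow> d w = k w"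
  shows "(\<Sum>w\<in>UNIV. q w * d w) = (\<Sum>w\<in>A. q w * k w)"
proof -
  have "(\<Sum>w\<in>UNIV. q w * d w) = (\<Sum>w\<in>A. q w * d w)"
    by (rule sum.mono_neutral_right) (auto simp: assms(1))
  also have "\<dots> = (\<Sum>w\<in>A. q w * k w)" by (rule sum.cong) (auto simp: assms(2))
  finally show ?thesis .
qed

lemma avoid_finite:
  fixes a b :: real
  assumes "finite T" "a < b"
  shows "\<exists>t. a < t \<and> t < b \<and> t \<notin> T"
proof -
  have "infinite {a<..<b}" using infinite_Ioo[OF assms(2)] .
  hence "{a<..<b} - T \<noteq> {}" using assms(1) by (metis finite_Diff2 finite.emptyI)
  thus ?thesis by auto
qed

theorem theorem2:
  fixes p :: "'w::finite \<Rightarrow> real"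
    and u :: "'o \<Rightarrow> real"
    and \<E> :: "'w set set"
    and P :: "'w set \<Rightarrow> 'w \<Rightarrow> ('w \<Rightarrow> real)"
    and E :: "'w set"
    and \<omega>0 :: 'w
  assumes "prob_fun p"
    and "utility_richness u"
    and "evidence_partition p \<E>"
    and "update_rule \<E> P"
    and EI: "\<forall>S. finite S \<and> unique_max u \<E> P S \<longrightarrow> evidential_independence p u \<E> P S"
    and "E \<in> \<E>" and "\<omega>0 \<in> E" and "p \<omega>0 > 0"
    and "P E \<omega>0 \<noteq> cond p E"
  shows "\<exists>S. finite S \<and> unique_max u \<E> P S \<and> Val_General p u \<E> P S < 0"
proof -
  note assms(1-4,6-9)
  note prob = assms(1) and UR = assms(2) and EP = assms(3) and UPD = assms(4)
    and EE = assms(6) and w0E = assms(7) and pw0 = assms(8) and neq = assms(9)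
  have pnn: "\<And>w. p w \<ge> 0" and psum: "(\<Sum>w\<in>UNIV. p w) = 1"
    using prob unfolding prob_fun_def by auto
  have part: "partition_on UNIV \<E>" and cellpos: "\<And>E'. E' \<in> \<E> \<Longrightarrow> Pr p E' > 0"
    using EP unfolding evidence_partition_def by auto
  have cellP: "\<And>E' w. E' \<in> \<E> \<Longrightarrow> w \<in> E' \<Longrightarrow> prob_fun (P E' w) \<and> Pr (P E' w) E' = 1"
    using UPD unfolding update_rule_def by auto
  have cellP0: "\<And>E' w x. E' \<in> \<E> \<Longrightarrow> w \<in> E' \<Longrightarrow> x \<notin> E' \<Longrightarrow> P E' w x = 0"
    using cellP zero_outside by blast
  have cellP1: "\<And>E' w. E' \<in> \<E> \<Longrightarrow> w \<in> E' \<Longrightarrow> (\<Sum>x\<in>E'. P E' w x) = 1"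
    using cellP unfolding Pr_def by blast
  have cellPnn: "\<And>E' w x. E' \<in> \<E> \<Longrightarrow> w \<in> E' \<Longrightarrow> P E' w x \<ge> 0"
    using cellP unfolding prob_fun_def by blast
  have ex_cell: "\<And>w. \<exists>c\<in>\<E>. w \<in> c" using partition_onD1[OF part] by blast
  have uniq_cell: "\<And>c c' w. c \<in> \<E> \<Longrightarrow> c' \<in> \<E> \<Longrightarrow> w \<in> c \<Longrightarrow> w \<in> c' \<Longrightarrow> c = c'"
    using partition_onD2[OF part] by (metis disjointD disjoint_iff)
  have PE_eq: "\<And>c w. c \<in> \<E> \<Longrightarrow> w \<in> c \<Longrightarrow> PE \<E> P w = P c w"
  proof -
    fix c w assume c: "c \<in> \<E>" "w \<in> c"
    have "(THE E. E \<in> \<E> \<and> w \<in> E) = c"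
      using c uniq_cell by (intro the_equality) auto
    thus "PE \<E> P w = P c w" unfolding PE_def by simp
  qed
  define q where "q = P E \<omega>0"
  define r where "r = cond p E"
  have PrE: "Pr p E > 0" using cellpos EE .
  have r0: "\<And>x. x \<notin> E \<Longrightarrow> r x = 0" unfolding r_def cond_def by simp
  have rnn: "\<And>x. r x \<ge> 0" unfolding r_def cond_def using pnn PrE by simp
  have r1: "(\<Sum>x\<in>E. r x) = 1"
  proof -
    have "(\<Sum>x\<in>E. r x) = (\<Sum>x\<in>E. p x / Pr p E)" unfolding r_def cond_def by simp
    also have "\<dots> = (\<Sum>x\<in>E. p x) / Pr p E" by (simp add: sum_divide_distrib)
    also have "\<dots> = Pr p E / Pr p E" unfolding Pr_def ..
    finally show ?thesis using PrE by simp
  qed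
  have q0: "\<And>x. x \<notin> E \<Longrightarrow> q x = 0" unfolding q_def using cellP0 EE w0E by blast
  have qnn: "\<And>x. q x \<ge> 0" unfolding q_def using cellPnn EE w0E by blast
  have q1: "(\<Sum>x\<in>E. q x) = 1" unfolding q_def using cellP1 EE w0E by blast
  obtain v where v: "q v \<noteq> r v" using neq unfolding q_def r_def by blast
  have vE: "v \<in> E" using v q0 r0 by force
  have le1: "\<And>f :: 'w \<Rightarrow> real. (\<And>x. f x \<ge> 0) \<Longrightarrow> (\<Sum>x\<in>E. f x) = 1 \<Longrightarrow> f v \<le> 1"
    by (metis finite member_le_sum vE finite_subset subset_UNIV)
  have qv: "0 \<le> q v" "q v \<le> 1" using qnn le1[of q] q1 qnn by auto
  have rv: "0 \<le> r v" "r v \<le> 1" using rnn le1[of r] r1 rnn by auto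
  obtain t where t: "min (q v) (r v) < t" "t < max (q v) (r v)"
    and tT: "t \<notin> (\<lambda>w. P E w v) ` E"
  proof -
    have "min (q v) (r v) < max (q v) (r v)" using v by (auto simp: min_def max_def)
    moreover have "finite ((\<lambda>w. P E w v) ` E)" by simp
    ultimately show ?thesis using avoid_finite that by blast
  qed
  have t01: "0 < t" "t < 1" using t qv rv by auto
  define s where "s = q v - r v"
  have sq: "s * (q v - t) > 0" and sr: "s * (r v - t) < 0"
    using t v unfolding s_def by (auto simp: min_def max_def split: if_splits intro: mult_pos_pos mult_neg_neg mult_pos_neg mult_neg_pos)
  have sabs: "\<bar>s\<bar> \<le> 1" using qv rv unfolding s_def by auto
  define d where "d w = (if w \<in> E then s * ((if w = v then 1 else 0) - t) / 4 else - 1 / 4)" for w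
  have dbound: "0 \<le> 1/2 + d w \<and> 1/2 + d w \<le> 1" for w
  proof -
    have "\<bar>(if w = v then 1 else 0) - t\<bar> \<le> 1" using t01 by auto
    hence "\<bar>s * ((if w = v then 1 else 0) - t)\<bar> \<le> 1"
      using sabs by (simp add: abs_mult mult_le_one)
    thus ?thesis unfolding d_def by (auto simp: abs_le_iff)
  qed
  have DE: "(\<Sum>w\<in>UNIV. qq w * d w) = s / 4 * (qq v - t)"
    if "\<And>x. x \<notin> E \<Longrightarrow> qq x = 0" "(\<Sum>x\<in>E. qq x) = 1" for qq
  proof -
    have "(\<Sum>w\<in>UNIV. qq w * d w) = (\<Sum>w\<in>E. qq w * (s / 4 * (if w = v then 1 else 0) - s / 4 * t))"
      by (rule conc_sum) (auto simp: that d_def right_diff_distrib diff_divide_distrib)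
    also have "\<dots> = s / 4 * (\<Sum>w\<in>E. qq w * (if w = v then 1 else 0)) - s / 4 * t * (\<Sum>w\<in>E. qq w)"
      by (simp add: algebra_simps sum_subtractf sum_distrib_left)
    also have "(\<Sum>w\<in>E. qq w * (if w = v then 1 else 0)) = qq v"
    proof -
      have "(\<Sum>w\<in>E. qq w * (if w = v then 1 else 0)) = (\<Sum>w\<in>E. if w = v then qq w else 0)"
        by (rule sum.cong) auto
      also have "\<dots> = qq v" using vE by (simp add: sum.delta sum.delta')
      finally show ?thesis .
    qed
    finally show ?thesis using that(2) by (simp add: algebra_simps)
  qed
  have Dout: "(\<Sum>x\<in>UNIV. P c w x * d x) = - 1 / 4" if "c \<in> \<E>" "w \<in> c" "c \<noteq> E" for c w
  proof -
    have "(\<Sum>x\<in>UNIV. P c w x * d x) = (\<Sum>x\<in>c. P c w x * (- 1 / 4))"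
    proof (rule conc_sum)
      show "x \<notin> c \<Longrightarrow> P c w x = 0" for x using cellP0 that by blast
      show "x \<in> c \<Longrightarrow> d x = - 1 / 4" for x using uniq_cell[OF that(1) EE] that unfolding d_def by auto
    qed
    also have "\<dots> = - 1 / 4" using cellP1[OF that(1,2)] by (simp add: sum_negf sum_divide_distrib[symmetric])
    finally show ?thesis .
  qed
  define oc where "oc x = (SOME o'. u o' = x)" for x
  have uoc: "0 \<le> x \<Longrightarrow> x \<le> 1 \<Longrightarrow> u (oc x) = x" for x
    using UR unfolding utility_richness_def oc_def by (metis (mono_tags, lifting) someI_ex)
  define f where "f = (\<lambda>w::'w. oc (1/2))"
  define g where "g = (\<lambda>w. oc (1/2 + d w))"
  have uf: "u (f w) = 1/2" for w unfolding f_def by (rule uoc) auto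
  have ug: "u (g w) = 1/2 + d w" for w unfolding g_def using dbound by (intro uoc) auto
  have EUf: "EU qq u f = 1/2 * (\<Sum>w\<in>UNIV. qq w)" for qq
    unfolding EU_def uf by (simp add: sum_distrib_right)
  have EUg: "EU qq u g = 1/2 * (\<Sum>w\<in>UNIV. qq w) + (\<Sum>w\<in>UNIV. qq w * d w)" for qq
    unfolding EU_def ug by (simp add: sum_distrib_right sum.distrib distrib_left)
  define S where "S = {f, g}"
  define D where "D w = (\<Sum>x\<in>UNIV. PE \<E> P w x * d x)" for w
  have sumPE: "(\<Sum>x\<in>UNIV. PE \<E> P w x) = 1" for w
    using ex_cell[of w] PE_eq cellP unfolding prob_fun_def by metis
  have EUfP: "EU (PE \<E> P w) u f = 1/2" for w using EUf sumPE by simp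
  have EUgP: "EU (PE \<E> P w) u g = 1/2 + D w" for w using EUg sumPE D_def by simp
  have Dnz: "D w \<noteq> 0" for w
  proof -
    obtain c where c: "c \<in> \<E>" "w \<in> c" using ex_cell by blast
    show ?thesis
    proof (cases "c = E")
      case True
      have "D w = s / 4 * (P E w v - t)" unfolding D_def PE_eq[OF c] True
        using cellP0[OF EE] cellP1[OF EE] c True by (intro DE) auto
      moreover have "P E w v \<noteq> t" using tT c True by auto
      moreover have "s \<noteq> 0" using v s_def by simp
      ultimately show ?thesis by (metis divide_eq_0_iff mult_eq_0_iff right_minus_eq zero_neq_numeral)
    next
      case False
      then show ?thesis unfolding D_def PE_eq[OF c] using Dout c by simp
    qed
  qed
  have Dout': "w \<notin> E \<Longrightarrow> D w < 0" for w
  proof -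
    assume "w \<notin> E"
    obtain c where c: "c \<in> \<E>" "w \<in> c" using ex_cell by blast
    hence "c \<noteq> E" using \<open>w \<notin> E\<close> by auto
    thus ?thesis unfolding D_def PE_eq[OF c] using Dout c by simp
  qed
  have D0: "D \<omega>0 > 0"
  proof -
    have "D \<omega>0 = s / 4 * (q v - t)" unfolding D_def PE_eq[OF EE w0E] q_def[symmetric]
      using q0 q1 by (intro DE) auto
    thus ?thesis using sq by simp
  qed
  have opt_iff: "is_opt u \<E> P S w h \<longleftrightarrow> h = (if D w > 0 then g else f)" for w h
  proof -
    have "is_opt u \<E> P S w h \<longleftrightarrow> (h = f \<or> h = g) \<and> EU (PE \<E> P w) u f \<le> EU (PE \<E> P w) u h
       \<and> EU (PE \<E> P w) u g \<le> EU (PE \<E> P w) u h"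
      unfolding is_opt_def S_def by auto
    also have "\<dots> \<longleftrightarrow> h = (if D w > 0 then g else f)"
      using Dnz[of w] by (cases "D w > 0") (auto simp: EUfP EUgP)
    finally show ?thesis .
  qed
  have UM: "unique_max u \<E> P S"
    unfolding unique_max_def using opt_iff by auto
  have fstar: "fstar u \<E> P S w = (if D w > 0 then g else f)" for w
    unfolding fstar_def opt_iff by simp
  have finS: "finite S" unfolding S_def by simp
  have evi: "evidential_independence p u \<E> P S" using EI finS UM by blast
  define C where "C = {w\<in>E. fstar u \<E> P S w = g}"
  have w0C: "\<omega>0 \<in> C" unfolding C_def using w0E fstar D0 by simp
  have PrC: "Pr p C > 0"
  proof -
    have "p \<omega>0 \<le> Pr p C" unfolding Pr_def using w0C pnn
      by (intro member_le_sum) auto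
    thus ?thesis using pw0 by simp
  qed
  have EIg: "EU (cond p C) u g = EU (cond p E) u g"
    using evi EE PrC unfolding evidential_independence_def S_def C_def Let_def by auto
  have condsum: "(\<Sum>x\<in>UNIV. cond p A x) = 1" and condD: "(\<Sum>x\<in>UNIV. cond p A x * d x) = (\<Sum>x\<in>A. p x * d x) / Pr p A"
    if "Pr p A > 0" for A
  proof -
    have "(\<Sum>x\<in>UNIV. cond p A x * 1) = (\<Sum>x\<in>A. cond p A x * 1)"
      by (rule conc_sum) (auto simp: cond_def)
    also have "\<dots> = (\<Sum>x\<in>A. p x / Pr p A * 1)" by (rule sum.cong) (auto simp: cond_def)
    also have "\<dots> = 1" using that by (simp add: sum_divide_distrib[symmetric] Pr_def)
    finally show "(\<Sum>x\<in>UNIV. cond p A x) = 1" by simp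
    have "(\<Sum>x\<in>UNIV. cond p A x * d x) = (\<Sum>x\<in>A. cond p A x * d x)"
      by (rule conc_sum) (auto simp: cond_def)
    also have "\<dots> = (\<Sum>x\<in>A. p x / Pr p A * d x)" by (rule sum.cong) (auto simp: cond_def)
    also have "\<dots> = (\<Sum>x\<in>A. p x * d x) / Pr p A" by (simp add: sum_divide_distrib)
    finally show "(\<Sum>x\<in>UNIV. cond p A x * d x) = (\<Sum>x\<in>A. p x * d x) / Pr p A" .
  qed
  have Dr: "(\<Sum>x\<in>UNIV. r x * d x) = s / 4 * (r v - t)" using DE r0 r1 by blast
  have keyC: "(\<Sum>x\<in>C. p x * d x) / Pr p C = s / 4 * (r v - t)"
    using EIg unfolding EUg condsum[OF PrC] condsum[OF PrE] condD[OF PrC]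
    using Dr r_def by simp
  have negC: "(\<Sum>x\<in>C. p x * d x) < 0"
  proof -
    have "(\<Sum>x\<in>C. p x * d x) = Pr p C * (s / 4 * (r v - t))"
      using keyC PrC by (simp add: field_simps)
    moreover have "s / 4 * (r v - t) < 0" using sr by simp
    moreover have "Pr p C * (s / 4 * (r v - t)) < 0" using PrC calculation(2) by (rule mult_pos_neg)
    ultimately show ?thesis by simp
  qed
  have ufs: "u (fstar u \<E> P S w w) = 1/2 + (if w \<in> C then d w else 0)" for w
  proof (cases "w \<in> C")
    case True thus ?thesis unfolding C_def using ug by simp
  next
    case False
    hence "fstar u \<E> P S w = f"
      unfolding C_def using fstar[of w] Dout'[of w] by (auto split: if_splits)
    thus ?thesis using False uf by simp
  qed
  have sum1: "(\<Sum>w\<in>UNIV. p w * u (fstar u \<E> P S w w)) = 1/2 + (\<Sum>x\<in>C. p x * d x)"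
  proof -
    have "(\<Sum>w\<in>UNIV. p w * u (fstar u \<E> P S w w)) = (\<Sum>w\<in>UNIV. 1/2 * p w + (if w \<in> C then p w * d w else 0))"
      unfolding ufs by (rule sum.cong) (auto simp: algebra_simps)
    also have "\<dots> = 1/2 * (\<Sum>w\<in>UNIV. p w) + (\<Sum>x\<in>C. p x * d x)"
      by (simp add: sum.distrib sum_distrib_left sum.If_cases)
    finally show ?thesis using psum by simp
  qed
  have maxge: "Max ((\<lambda>f. EU p u f) ` S) \<ge> 1/2"
  proof -
    have "EU p u f \<le> Max ((\<lambda>f. EU p u f) ` S)" using finS unfolding S_def by (intro Max_ge) auto
    thus ?thesis using EUf psum by simp
  qed
  have "Val_General p u \<E> P S < 0"
    unfolding Val_General_def sum1 using maxge negC by simp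
  thus ?thesis using finS UM by blast
qed

end
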